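(* Let $\Gamma$ be a finite undirected graph with clique number three, in which any two adjacent vertices, and any two vertices at distance two, have exactly two common neighbors. Then $G_{aut}^+(\Gamma)=G_{aut}^*(\Gamma)$.
   Context: $\Gamma=(V,E)$ is a finite simple undirected graph, $V=\{1,\dots,n\}$. The clique number is the maximal size of a set of pairwise adjacent vertices. $C(G_{aut}^+(\Gamma))$ is the universal unital $C^*$-algebra generated by $u_{ij}$, $1\le i,j\le n$, with relations: (R1) $u_{ij}=u_{ij}^*=u_{ij}^2$; (R2) $\sum_{l} u_{il}=1=\sum_{l} u_{li}$ for all $i$; (R3) $u_{ij}u_{kl}=u_{kl}u_{ij}=0$ whenever exactly one of $(i,k)\in E$, $(j,l)\in E$ holds. "$G_{aut}^+(\Gamma)=G_{aut}^*(\Gamma)$" means $u_{ij}u_{kl}=u_{kl}u_{ij}$ holds in $C(G_{aut}^+(\Gamma))$ for all $(i,k)\in E$, $(j,l)\in E$. *)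

theory Defs
  imports "HOL-Analysis.Analysis"
begin

text \<open>Unital complex C*-algebra structure on a type 'a: 'a is a real Banach algebra with
unit (norm 1 = 1), together with a complex scalar multiplication sc extending scaleR and an
involution st satisfying the C*-identity.\<close>

definition cstar_algebra ::
  "(complex \<Rightarrow> 'a::{real_normed_algebra_1,banach} \<Rightarrow> 'a) \<Rightarrow> ('a \<Rightarrow> 'a) \<Rightarrow> bool" where
  "cstar_algebra sc st \<longleftrightarrow>
     (\<forall>r x. sc (complex_of_real r) x = scaleR r x) \<and>
     (\<forall>c d x. sc (c * d) x = sc c (sc d x)) \<and>
     (\<forall>c x y. sc c (x + y) = sc c x + sc c y) \<and>
     (\<forall>c d x. sc (c + d) x = sc c x + sc d x) \<and>
     (\<forall>c x y. sc c (x * y) = sc c x * y \<and> sc c (x * y) = x * sc c y) \<and>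
     (\<forall>c x. norm (sc c x) = cmod c * norm x) \<and>
     (\<forall>x y. st (x + y) = st x + st y) \<and>
     (\<forall>c x. st (sc c x) = sc (cnj c) (st x)) \<and>
     (\<forall>x y. st (x * y) = st y * st x) \<and>
     (\<forall>x. st (st x) = x) \<and>
     (\<forall>x. norm (st x * x) = (norm x)\<^sup>2)"

definition simple_graph :: "nat \<Rightarrow> (nat \<Rightarrow> nat \<Rightarrow> bool) \<Rightarrow> bool" where
  "simple_graph n E \<longleftrightarrow>
     (\<forall>i j. E i j \<longrightarrow> i \<in> {1..n} \<and> j \<in> {1..n}) \<and>
     (\<forall>i j. E i j \<longrightarrow> E j i) \<and> (\<forall>i. \<not> E i i)"

definition is_clique :: "nat \<Rightarrow> (nat \<Rightarrow> nat \<Rightarrow> bool) \<Rightarrow> nat set \<Rightarrow> bool" where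
  "is_clique n E C \<longleftrightarrow> C \<subseteq> {1..n} \<and> (\<forall>x\<in>C. \<forall>y\<in>C. x \<noteq> y \<longrightarrow> E x y)"

definition clique_number :: "nat \<Rightarrow> (nat \<Rightarrow> nat \<Rightarrow> bool) \<Rightarrow> nat" where
  "clique_number n E = Max {card C | C. is_clique n E C}"

definition common_nbrs :: "nat \<Rightarrow> (nat \<Rightarrow> nat \<Rightarrow> bool) \<Rightarrow> nat \<Rightarrow> nat \<Rightarrow> nat set" where
  "common_nbrs n E x y = {w \<in> {1..n}. E x w \<and> E y w}"

definition dist_two :: "nat \<Rightarrow> (nat \<Rightarrow> nat \<Rightarrow> bool) \<Rightarrow> nat \<Rightarrow> nat \<Rightarrow> bool" where
  "dist_two n E x y \<longleftrightarrow> x \<noteq> y \<and> \<not> E x y \<and> common_nbrs n E x y \<noteq> {}"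

text \<open>Relations (R1)-(R3) of C(G_aut^+(Gamma)) for a family u in a C*-algebra.\<close>
definition qaut_rel ::
  "nat \<Rightarrow> (nat \<Rightarrow> nat \<Rightarrow> bool) \<Rightarrow> ('a::{real_normed_algebra_1,banach} \<Rightarrow> 'a) \<Rightarrow> (nat \<Rightarrow> nat \<Rightarrow> 'a) \<Rightarrow> bool" where
  "qaut_rel n E st u \<longleftrightarrow>
     (\<forall>i\<in>{1..n}. \<forall>j\<in>{1..n}. st (u i j) = u i j \<and> u i j * u i j = u i j) \<and>
     (\<forall>i\<in>{1..n}. (\<Sum>l\<in>{1..n}. u i l) = 1 \<and> (\<Sum>l\<in>{1..n}. u l i) = 1) \<and>
     (\<forall>i\<in>{1..n}. \<forall>j\<in>{1..n}. \<forall>k\<in>{1..n}. \<forall>l\<in>{1..n}.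
        (E i k \<noteq> E j l) \<longrightarrow> u i j * u k l = 0 \<and> u k l * u i j = 0)"

end

theory Submission
  imports Defs
begin

lemma card2_other:
  assumes "card X = 2" "a \<in> X"
  shows "\<exists>b. b \<in> X \<and> b \<noteq> a \<and> (\<forall>v\<in>X. v = a \<or> v = b)"
proof -
  obtain x y where X: "X = {x, y}" "x \<noteq> y" using assms(1) by (meson card_2_iff)
  show ?thesis
  proof (cases "a = x")
    case True
    show ?thesis by (rule exI[of _ y]) (use X True in auto)
  next
    case False
    then have ay: "a = y" using assms(2) X by simp
    show ?thesis by (rule exI[of _ x]) (use X ay in auto)
  qed
qed

lemma core:
  fixes u :: "nat \<Rightarrow> nat \<Rightarrow> 'a::ring_1"
  assumes R2: "\<forall>i\<in>{1..n}. (\<Sum>l\<in>{1..n}. u i l) = 1 \<and> (\<Sum>l\<in>{1..n}. u l i) = 1"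
    and R3: "\<forall>i\<in>{1..n}. \<forall>j\<in>{1..n}. \<forall>k\<in>{1..n}. \<forall>l\<in>{1..n}.
        (E i k \<noteq> E j l) \<longrightarrow> u i j * u k l = 0 \<and> u k l * u i j = 0"
    and sym: "\<forall>x y. E x y \<longrightarrow> E y x"
    and mem: "i \<in> {1..n}" "j \<in> {1..n}" "k \<in> {1..n}" "l \<in> {1..n}" "t \<in> {1..n}"
      "q \<in> {1..n}" "w \<in> {1..n}"
    and h: "E i k" "E j q" "E l q" "\<not> E q t" "E q w" "E t w" "\<not> E j w" "w \<noteq> l" "E l t"
    and uniq: "\<forall>v\<in>{1..n}. E q v \<and> E t v \<longrightarrow> v = l \<or> v = w"
  shows "u i j * u k l * u i t = 0"
proof -
  let ?S = "{1..n::nat}"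
  have Z: "u a b * u c d = 0" if "a \<in> ?S" "b \<in> ?S" "c \<in> ?S" "d \<in> ?S" "E a c \<noteq> E b d" for a b c d
    using R3 that by blast
  have A: "u i j * u z q * u k l * u i t = - (u i j * u z q * u k w * u i t)" if z: "z \<in> ?S" for z
  proof (cases "E i z")
    case False
    have "u i j * u z q = 0" using Z[of i j z q] mem z h False by simp
    then show ?thesis by simp
  next
    case Eiz: True
    show ?thesis
    proof (cases "E z k")
      case False
      have "E q l" using sym h by blast
      then have 1: "u z q * u k l = 0" using Z[of z q k l] mem z False by simp
      have 2: "u z q * u k w = 0" using Z[of z q k w] mem z False h by simp
      show ?thesis using 1 2 by (simp add: mult.assoc)
    next
      case Ezk: True
      have Ezi: "E z i" using sym Eiz by blast
      have Eki: "E k i" using sym h by blast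
      have z0: "u z q * u i t = 0" using Z[of z q i t] mem z Ezi h by simp
      have "u z q * u i t = u z q * (\<Sum>w'\<in>?S. u k w') * u i t" using R2 mem by simp
      also have "\<dots> = (\<Sum>w'\<in>?S. u z q * u k w' * u i t)"
        by (simp only: sum_distrib_left sum_distrib_right)
      also have "\<dots> = (\<Sum>w'\<in>{l, w}. u z q * u k w' * u i t)"
      proof (rule sum.mono_neutral_right)
        show "finite ?S" by simp
        show "{l, w} \<subseteq> ?S" using mem by simp
        show "\<forall>x\<in>?S - {l, w}. u z q * u k x * u i t = 0"
        proof
          fix x assume x: "x \<in> ?S - {l, w}"
          show "u z q * u k x * u i t = 0"
          proof (cases "E q x")
            case False
            then have "u z q * u k x = 0" using Z[of z q k x] mem z x Ezk by simp
            then show ?thesis by simp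
          next
            case True
            then have "\<not> E t x" using uniq x by blast
            then have "\<not> E x t" using sym by blast
            then have "u k x * u i t = 0" using Z[of k x i t] mem z x Eki by simp
            then show ?thesis by (simp add: mult.assoc)
          qed
        qed
      qed
      also have "\<dots> = u z q * u k l * u i t + u z q * u k w * u i t"
        using h by simp
      finally have "u z q * u k l * u i t + u z q * u k w * u i t = 0"
        using z0 by simp
      then have "u z q * u k l * u i t = - (u z q * u k w * u i t)"
        by (rule eq_neg_iff_add_eq_0[THEN iffD2])
      then show ?thesis by (simp add: mult.assoc)
    qed
  qed
  have "u i j * u k l * u i t = u i j * (\<Sum>z\<in>?S. u z q) * u k l * u i t"
    using R2 mem by simp
  also have "\<dots> = (\<Sum>z\<in>?S. u i j * u z q * u k l * u i t)"
    by (simp only: sum_distrib_left sum_distrib_right)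
  also have "\<dots> = (\<Sum>z\<in>?S. - (u i j * u z q * u k w * u i t))"
    using A by (rule sum.cong[OF refl])
  also have "\<dots> = - (u i j * (\<Sum>z\<in>?S. u z q) * u k w * u i t)"
    by (simp only: sum_negf sum_distrib_left sum_distrib_right)
  also have "\<dots> = - (u i j * u k w * u i t)" using R2 mem by simp
  also have "\<dots> = 0" using Z[of i j k w] mem h by simp
  finally show ?thesis .
qed

theorem lemma6p1:
  fixes n :: nat and E :: "nat \<Rightarrow> nat \<Rightarrow> bool"
    and sc :: "complex \<Rightarrow> 'a::{real_normed_algebra_1,banach} \<Rightarrow> 'a" and st :: "'a \<Rightarrow> 'a"
    and u :: "nat \<Rightarrow> nat \<Rightarrow> 'a"
  assumes "simple_graph n E"
    and "clique_number n E = 3"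
    and "\<forall>x\<in>{1..n}. \<forall>y\<in>{1..n}. E x y \<longrightarrow> card (common_nbrs n E x y) = 2"
    and "\<forall>x\<in>{1..n}. \<forall>y\<in>{1..n}. dist_two n E x y \<longrightarrow> card (common_nbrs n E x y) = 2"
    and "cstar_algebra sc st"
    and "qaut_rel n E st u"
  shows "\<forall>i\<in>{1..n}. \<forall>j\<in>{1..n}. \<forall>k\<in>{1..n}. \<forall>l\<in>{1..n}.
           E i k \<and> E j l \<longrightarrow> u i j * u k l = u k l * u i j"
proof -
  let ?S = "{1..n::nat}"
  have inS: "x \<in> ?S" "y \<in> ?S" if "E x y" for x y
    using assms(1) that unfolding simple_graph_def by blast+
  have sym: "\<forall>x y. E x y \<longrightarrow> E y x" using assms(1) unfolding simple_graph_def by blast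
  have irr: "\<not> E x x" for x using assms(1) unfolding simple_graph_def by blast
  have R1: "\<forall>i\<in>?S. \<forall>j\<in>?S. st (u i j) = u i j \<and> u i j * u i j = u i j"
    using assms(6) unfolding qaut_rel_def by blast
  have R2: "\<forall>i\<in>?S. (\<Sum>l\<in>?S. u i l) = 1 \<and> (\<Sum>l\<in>?S. u l i) = 1"
    using assms(6) unfolding qaut_rel_def by blast
  have R3: "\<forall>i\<in>?S. \<forall>j\<in>?S. \<forall>k\<in>?S. \<forall>l\<in>?S.
        (E i k \<noteq> E j l) \<longrightarrow> u i j * u k l = 0 \<and> u k l * u i j = 0"
    using assms(6) unfolding qaut_rel_def by blast
  have stmul: "st (x * y) = st y * st x" for x y
    using assms(5) unfolding cstar_algebra_def by blast
  have memc: "v \<in> common_nbrs n E x y \<longleftrightarrow> v \<in> ?S \<and> E x v \<and> E y v" for v x y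
    by (simp add: common_nbrs_def)
  have no4: False if "E a b" "E a c" "E a d" "E b c" "E b d" "E c d" for a b c d
  proof -
    have d: "a \<noteq> b" "a \<noteq> c" "a \<noteq> d" "b \<noteq> c" "b \<noteq> d" "c \<noteq> d"
      using that irr by metis+
    have s: "E b a" "E c a" "E d a" "E c b" "E d b" "E d c" using that sym by blast+
    have sub: "{a, b, c, d} \<subseteq> ?S" using that inS by blast
    have cl: "is_clique n E {a, b, c, d}"
      unfolding is_clique_def using sub that s by blast
    have c4: "card {a, b, c, d} = 4" using d by simp
    have fin: "finite {card C |C. is_clique n E C}"
    proof (rule finite_subset)
      show "{card C |C. is_clique n E C} \<subseteq> card ` Pow ?S"
        unfolding is_clique_def by blast
    qed simp
    have "4 \<in> {card C |C. is_clique n E C}" using cl c4 by force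
    then have "4 \<le> clique_number n E" unfolding clique_number_def using fin by simp
    then show False using assms(2) by simp
  qed
  have cn: "card (common_nbrs n E x y) = 2" if "E x y" for x y
    using assms(3) that inS by blast
  have cd: "card (common_nbrs n E x y) = 2"
    if "x \<noteq> y" "\<not> E x y" "E x v" "E y v" for x y v
  proof -
    have "v \<in> common_nbrs n E x y" using memc that inS by blast
    then have "dist_two n E x y" unfolding dist_two_def using that by blast
    then show ?thesis using assms(4) inS that by blast
  qed
  have qw: "\<exists>q w. q \<in> ?S \<and> w \<in> ?S \<and> E j q \<and> E l q \<and> \<not> E q t \<and> E q w \<and> E t w \<and> \<not> E j w
      \<and> w \<noteq> l \<and> (\<forall>v\<in>?S. E q v \<and> E t v \<longrightarrow> v = l \<or> v = w)"
    if jl: "E j l" and lt: "E l t" and tj: "t \<noteq> j" for j l t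
  proof (cases "E j t")
    case True
    have "t \<in> common_nbrs n E j l" using memc True lt inS sym by blast
    then obtain q where q: "q \<in> common_nbrs n E j l" "q \<noteq> t"
      using card2_other[OF cn[OF jl]] by blast
    have Ejq: "E j q" and Elq: "E l q" and qS: "q \<in> ?S" using q memc by blast+
    have nqt: "\<not> E q t"
    proof
      assume "E q t"
      then show False using no4[of j l t q] jl True Ejq lt Elq sym by blast
    qed
    have c2: "card (common_nbrs n E q t) = 2"
      using cd[of q t l] q(2) nqt Elq lt sym by blast
    have lin: "l \<in> common_nbrs n E q t" using memc Elq lt sym inS jl by blast
    have jin: "j \<in> common_nbrs n E q t" using memc Ejq True sym inS jl by blast
    obtain b where b: "b \<in> common_nbrs n E q t" "b \<noteq> l"
      "\<forall>v\<in>common_nbrs n E q t. v = l \<or> v = b"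
      using card2_other[OF c2 lin] by blast
    have "j \<noteq> l" using jl irr by blast
    then have bj: "b = j" using b jin by blast
    show ?thesis
    proof (intro exI conjI)
      show "q \<in> ?S" by fact
      show "j \<in> ?S" using inS jl by blast
      show "E j q" "E l q" "\<not> E q t" by fact+
      show "E q j" "E t j" using sym Ejq True by blast+
      show "\<not> E j j" by (rule irr)
      show "j \<noteq> l" by fact
      show "\<forall>v\<in>?S. E q v \<and> E t v \<longrightarrow> v = l \<or> v = j"
        using b(3) bj memc by blast
    qed
  next
    case False
    have c2: "card (common_nbrs n E j t) = 2"
      using cd[of j t l] tj False jl lt sym by blast
    have lin: "l \<in> common_nbrs n E j t" using memc jl lt sym inS by blast
    obtain l' where l': "l' \<in> common_nbrs n E j t" "l' \<noteq> l"
      "\<forall>v\<in>common_nbrs n E j t. v = l \<or> v = l'"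
      using card2_other[OF c2 lin] by blast
    have Ejl': "E j l'" and Etl': "E t l'" and l'S: "l' \<in> ?S" using l'(1) memc by blast+
    obtain x y where xy: "common_nbrs n E j l = {x, y}" "x \<noteq> y"
      using cn[OF jl] by (meson card_2_iff)
    obtain q where q: "q \<in> common_nbrs n E j l" "q \<noteq> l'"
      using xy by (cases "x = l'") auto
    have Ejq: "E j q" and Elq: "E l q" and qS: "q \<in> ?S" using q memc by blast+
    have nqt: "\<not> E q t"
    proof
      assume "E q t"
      then have "q \<in> common_nbrs n E j t" using memc Ejq sym qS by blast
      then have "q = l \<or> q = l'" using l'(3) by blast
      then show False using q(2) Elq irr by blast
    qed
    have qt: "q \<noteq> t" using Ejq False by blast
    have c2': "card (common_nbrs n E q t) = 2"
      using cd[of q t l] qt nqt Elq lt sym by blast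
    have lin': "l \<in> common_nbrs n E q t" using memc Elq lt sym inS jl by blast
    obtain w where w: "w \<in> common_nbrs n E q t" "w \<noteq> l"
      "\<forall>v\<in>common_nbrs n E q t. v = l \<or> v = w"
      using card2_other[OF c2' lin'] by blast
    have Eqw: "E q w" and Etw: "E t w" and wS: "w \<in> ?S" using w(1) memc by blast+
    have nEjw: "\<not> E j w"
    proof
      assume Ejw: "E j w"
      then have "w \<in> common_nbrs n E j t" using memc Etw wS by blast
      then have "w = l'" using l'(3) w(2) by blast
      then have Eql': "E q l'" using Eqw by simp
      show False
      proof (cases "E l l'")
        case True
        then show False using no4[of j l q l'] jl Ejq Ejl' Elq Eql' by blast
      next
        case nll': False
        have c3: "card (common_nbrs n E l l') = 2"
          using cd[of l l' j] l'(2) nll' jl Ejl' sym by blast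
        have jin: "j \<in> common_nbrs n E l l'" using memc jl Ejl' sym inS by blast
        obtain b where b: "b \<in> common_nbrs n E l l'" "b \<noteq> j"
          "\<forall>v\<in>common_nbrs n E l l'. v = j \<or> v = b"
          using card2_other[OF c3 jin] by blast
        have "t \<in> common_nbrs n E l l'" using memc lt Etl' sym inS by blast
        then have bt: "b = t" using b tj by blast
        have "q \<in> common_nbrs n E l l'" using memc Elq Eql' sym qS by blast
        then have "q = j \<or> q = t" using b(3) bt by blast
        then show False using qt Ejq irr by blast
      qed
    qed
    have uq: "\<forall>v\<in>?S. E q v \<and> E t v \<longrightarrow> v = l \<or> v = w"
      using w(3) memc by blast
    show ?thesis
      by (intro exI conjI) (fact qS wS Ejq Elq nqt Eqw Etw nEjw w(2) uq)+
  qed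
  show ?thesis
  proof (intro ballI impI)
    fix i j k l assume mem: "i \<in> ?S" "j \<in> ?S" "k \<in> ?S" "l \<in> ?S"
      and ed: "E i k \<and> E j l"
    have Eik: "E i k" and Ejl: "E j l" using ed by blast+
    have G: "u i j * u k l * u i t = 0" if tS: "t \<in> ?S" and tj: "t \<noteq> j" for t
    proof (cases "E l t")
      case True
      obtain q w where qw': "q \<in> ?S" "w \<in> ?S" "E j q" "E l q" "\<not> E q t" "E q w" "E t w"
        "\<not> E j w" "w \<noteq> l" "\<forall>v\<in>?S. E q v \<and> E t v \<longrightarrow> v = l \<or> v = w"
        using qw[OF Ejl True tj] by blast
      show ?thesis
        by (rule core[where i=i and j=j and k=k and l=l and t=t and q=q and w=w,
              OF R2 R3 sym mem tS qw'(1) qw'(2) Eik qw'(3) qw'(4) qw'(5) qw'(6) qw'(7) qw'(8)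
              qw'(9) True qw'(10)])
    next
      case False
      have "E k i" using sym Eik by blast
      then have "E k i \<noteq> E l t" using False by blast
      then have "u k l * u i t = 0" using R3 mem(3,4,1) tS by blast
      then show ?thesis by (simp add: mult.assoc)
    qed
    have PQ: "u i j * u k l = u i j * u k l * u i j"
    proof -
      have "u i j * u k l = u i j * u k l * (\<Sum>t\<in>?S. u i t)" using R2 mem by simp
      also have "\<dots> = (\<Sum>t\<in>?S. u i j * u k l * u i t)" by (simp add: sum_distrib_left)
      also have "\<dots> = (\<Sum>t\<in>{j}. u i j * u k l * u i t)"
        by (rule sum.mono_neutral_right) (use mem G in auto)
      also have "\<dots> = u i j * u k l * u i j" by simp
      finally show ?thesis .
    qed
    have sP: "st (u i j) = u i j" and sQ: "st (u k l) = u k l" using R1 mem by blast+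
    have "u k l * u i j = st (u i j * u k l)" by (simp only: stmul sP sQ)
    also have "\<dots> = st (u i j * u k l * u i j)" by (rule arg_cong[OF PQ])
    also have "\<dots> = u i j * u k l * u i j" by (simp only: stmul sP sQ mult.assoc)
    finally have "u k l * u i j = u i j * u k l * u i j" .
    then show "u i j * u k l = u k l * u i j" by (rule trans[OF PQ HOL.sym])
  qed
qed

end
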